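(* Let $0<q<1$, let $n$ be a nonnegative integer, let $k$ be an integer with $0\le k\le n$, and let $x\in[0,1]$. Then $$B_{n-k,n}(1-x,q)=B_{k,n}(x,q),$$ and $$\sum_{k=0}^n B_{k,n}(x,q)=\bigl(1+[x]_q[1-x]_q(1-q)\bigr)^n=B_{n,q}(1:x),$$ where $B_{n,q}(1:x)$ denotes the modified $q$-Bernstein operator applied to the constant function $1$.
   Context: Let $q$ be a real number with $0<q<1$. For real $x$, the $q$-number is $[x]_q=\frac{1-q^x}{1-q}$. For a nonnegative integer $k$ and $x\in[0,1]$, the modified $q$-Bernstein polynomials $B_{k,n}(x,q)$, $n=0,1,2,\dots$, are defined by the generating function $$\frac{t^k e^{[1-x]_q t}[x]_q^k}{k!}=\sum_{n=0}^\infty B_{k,n}(x,q)\frac{t^n}{n!}.$$ For $f$ continuous on $[0,1]$, the modified $q$-Bernstein operator is $B_{n,q}(f:x)=\sum_{j=0}^n f\left(\frac{j}{n}\right)B_{j,n}(x,q)$ for $x\in[0,1]$. *)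

theory Defs
  imports Complex_Main "HOL-Computational_Algebra.Formal_Power_Series"
begin

definition qnum :: "real \<Rightarrow> real \<Rightarrow> real" where
  "qnum q x = (1 - q powr x) / (1 - q)"

definition qBern_gf :: "nat \<Rightarrow> real \<Rightarrow> real \<Rightarrow> real fps" where
  "qBern_gf k x q = fps_const (qnum q x ^ k / fact k) * fps_X ^ k * fps_exp (qnum q (1 - x))"

definition qBern :: "nat \<Rightarrow> nat \<Rightarrow> real \<Rightarrow> real \<Rightarrow> real" where
  "qBern k n x q = fact n * fps_nth (qBern_gf k x q) n"

definition qBern_op :: "nat \<Rightarrow> real \<Rightarrow> (real \<Rightarrow> real) \<Rightarrow> real \<Rightarrow> real" where
  "qBern_op n q f x = (\<Sum>j=0..n. f (real j / real n) * qBern j n x q)"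

end

theory Submission
  imports Defs
begin

lemma qBern_closed:
  assumes "k \<le> n"
  shows "qBern k n x q = real (n choose k) * qnum q x ^ k * qnum q (1 - x) ^ (n - k)"
proof -
  have "qBern k n x q = fact n * (qnum q x ^ k / fact k) * (qnum q (1 - x) ^ (n - k) / fact (n - k))"
    unfolding qBern_def qBern_gf_def
    using assms by (simp add: mult.assoc fps_X_power_mult_nth fps_exp_def not_less)
  also have "\<dots> = real (n choose k) * qnum q x ^ k * qnum q (1 - x) ^ (n - k)"
    using assms by (simp add: binomial_fact field_simps)
  finally show ?thesis .
qed

theorem theorem3:
  fixes q x :: real and n k :: nat
  assumes "0 < q" "q < 1" "k \<le> n" "0 \<le> x" "x \<le> 1"
  shows "qBern (n - k) n (1 - x) q = qBern k n x q
    \<and> (\<Sum>j=0..n. qBern j n x q) = (1 + qnum q x * qnum q (1 - x) * (1 - q)) ^ n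
    \<and> (1 + qnum q x * qnum q (1 - x) * (1 - q)) ^ n = qBern_op n q (\<lambda>_. 1) x"
proof -
  have s1: "qBern (n - k) n (1 - x) q = qBern k n x q"
    using assms(3) by (simp add: qBern_closed binomial_symmetric[symmetric] mult_ac)
  have ab: "qnum q x + qnum q (1 - x) = 1 + qnum q x * qnum q (1 - x) * (1 - q)"
  proof -
    have "q powr x * q powr (1 - x) = q" using assms(1) by (simp add: powr_add[symmetric])
    moreover have "1 - q \<noteq> 0" using assms by simp
    moreover have "\<And>A B::real. A * B = q \<Longrightarrow> 1 - q \<noteq> 0 \<Longrightarrow>
        (1 - A) / (1 - q) + (1 - B) / (1 - q) = 1 + (1 - A) / (1 - q) * ((1 - B) / (1 - q)) * (1 - q)"
    proof -
      fix A B :: real assume h: "A * B = q" "1 - q \<noteq> 0"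
      have e: "(1 - A) / (1 - q) * ((1 - B) / (1 - q)) * (1 - q) = (1 - A) * (1 - B) / (1 - q)"
        using h(2) by (simp add: power2_eq_square)
      have "(1 - A) / (1 - q) + (1 - B) / (1 - q) = ((1 - q) + (1 - A) * (1 - B)) / (1 - q)"
        using h by (simp add: add_divide_distrib[symmetric]) (simp add: algebra_simps)
      also have "\<dots> = 1 + (1 - A) * (1 - B) / (1 - q)"
        using h(2) by (simp add: add_divide_distrib)
      finally show "(1 - A) / (1 - q) + (1 - B) / (1 - q) = 1 + (1 - A) / (1 - q) * ((1 - B) / (1 - q)) * (1 - q)"
        using e by simp
    qed
    ultimately show ?thesis unfolding qnum_def by blast
  qed
  have s2: "(\<Sum>j=0..n. qBern j n x q) = (1 + qnum q x * qnum q (1 - x) * (1 - q)) ^ n"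
    unfolding ab[symmetric] binomial_ring atLeast0AtMost
    by (intro sum.cong) (auto simp: qBern_closed)
  have s3: "qBern_op n q (\<lambda>_. 1) x = (\<Sum>j=0..n. qBern j n x q)"
    unfolding qBern_op_def by simp
  show ?thesis using s1 s2 s3 by simp
qed

end
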